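(* Let $b\colon\mathbb T^2\to\mathbb R^2$ be a bounded Borel vector field and let $T>0$. Let $\gamma_1\colon[0,T/2]\to\mathbb T^2$ and $\gamma_2\colon[0,T]\to\mathbb T^2$ be Lipschitz functions such that $\gamma_1'(t)=b(\gamma_1(t))$ for a.e. $t\in[0,T/2]$ and $\gamma_2'(t)=b(\gamma_2(t))$ for a.e. $t\in[0,T]$. Assume that $\gamma_1$ is injective and that $\gamma_2([0,T])\subset\gamma_1([0,T/2])$. Then $$\mathscr L^1\big(\{t\in[0,T]:\ \gamma_2'(t)=0\}\big)\ge\frac T2.$$
   Context: $\mathbb T^2=\mathbb R^2/\mathbb Z^2$; $\mathscr L^1$ is one-dimensional Lebesgue measure. *)

theory Defs
  imports "HOL-Analysis.Analysis"
begin

text \<open>The lattice Z^2 inside R^2; the torus T^2 = R^2/Z^2 is modelled by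
  Z^2-periodic functions on R^2 and by lifts of curves to R^2.\<close>
definition int_lattice :: "(real^2) set" where
  "int_lattice = {x. \<forall>i. x $ i \<in> \<int>}"

definition torus_periodic :: "(real^2 \<Rightarrow> 'b) \<Rightarrow> bool" where
  "torus_periodic f \<longleftrightarrow> (\<forall>x k. k \<in> int_lattice \<longrightarrow> f (x + k) = f x)"

end

theory Submission
  imports Defs
begin

lemma negl_lip_img:
  fixes h :: "real \<Rightarrow> real"
  assumes "negligible S"
    and "\<And>x. x\<in>S \<Longrightarrow> \<exists>d>0. \<exists>B. \<forall>y\<in>S. \<bar>y - x\<bar> < d \<longrightarrow> \<bar>h y - h x\<bar> \<le> B * \<bar>y - x\<bar>"
  shows "negligible (h ` S)"
proof (rule negligible_locally_Lipschitz_image[OF _ assms(1)])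
  fix x assume "x \<in> S"
  then obtain d B where d: "d > 0" "\<forall>y\<in>S. \<bar>y - x\<bar> < d \<longrightarrow> \<bar>h y - h x\<bar> \<le> B * \<bar>y - x\<bar>"
    using assms(2) by blast
  show "\<exists>T B. open T \<and> x \<in> T \<and> (\<forall>y\<in>S \<inter> T. norm (h y - h x) \<le> B * norm (y - x))"
    apply (rule exI[of _ "ball x d"], rule exI[of _ B])
    using d by (auto simp: dist_real_def abs_minus_commute)
qed simp

lemma negl_lip_img_glob:
  fixes h :: "real \<Rightarrow> real"
  assumes "negligible S" and "\<And>x y. x\<in>S \<Longrightarrow> y\<in>S \<Longrightarrow> \<bar>h y - h x\<bar> \<le> B * \<bar>y - x\<bar>"
  shows "negligible (h ` S)"
  apply (rule negl_lip_img[OF assms(1)])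
  subgoal for x by (rule exI[of _ 1], intro conjI exI[of _ B] ballI impI) (use assms(2) in auto)
  done

lemma negl_deriv0_img:
  fixes h :: "real \<Rightarrow> real"
  assumes "\<And>x e. x\<in>S \<Longrightarrow> e > 0 \<Longrightarrow> \<exists>d>0. \<forall>y\<in>S. \<bar>y - x\<bar> < d \<longrightarrow> \<bar>h y - h x\<bar> \<le> e * \<bar>y - x\<bar>"
  shows "negligible (h ` S)"
proof -
  let ?F = "\<lambda>x::real^1. (vec (h (x$1)) :: real^1)"
  let ?S = "(vec ` S) :: (real^1) set"
  have nv: "norm (z::real^1) = \<bar>z$1\<bar>" for z
    by (simp add: norm_vec_def L2_set_def)
  have der: "(?F has_derivative (\<lambda>_. 0)) (at x within ?S)" if "x \<in> ?S" for x
    unfolding has_derivative_within_alt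
  proof (intro conjI allI impI)
    show "bounded_linear (\<lambda>_. 0::real^1)" by simp
    fix e :: real assume "e > 0"
    from that obtain x0 where x0: "x0 \<in> S" "x = vec x0" by auto
    obtain d where d: "d>0" "\<forall>y\<in>S. \<bar>y - x0\<bar> < d \<longrightarrow> \<bar>h y - h x0\<bar> \<le> e * \<bar>y - x0\<bar>"
      using assms[OF x0(1) \<open>e>0\<close>] by blast
    show "\<exists>d>0. \<forall>y\<in>?S. norm (y - x) < d \<longrightarrow> norm (?F y - ?F x - 0) \<le> e * norm (y - x)"
      using d x0 by (auto simp: nv)
  qed
  have "negligible (?F ` ?S)"
  proof (rule baby_Sard[OF _ der])
    have m0: "matrix (\<lambda>_::real^1. 0::real^1) = (0::real^1^1)" by (simp add: matrix_def vec_eq_iff)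
    show "rank (matrix (\<lambda>_::real^1. 0::real^1)) < CARD(1)" by (subst m0) simp
  qed simp
  moreover have "?F ` ?S = vec ` (h ` S)" by (auto simp: image_image)
  ultimately have n1: "negligible (vec ` (h ` S) :: (real^1) set)" by simp
  have "negligible ((\<lambda>x::real^1. x$1) ` (vec ` (h ` S)))"
    apply (rule negligible_differentiable_image_negligible[OF _ n1])
     apply simp
    by (simp add: bounded_linear_imp_differentiable_on bounded_linear_vec_nth)
  then show ?thesis by (simp add: image_image)
qed

lemma cont_preimage_lebesgue:
  fixes h :: "real \<Rightarrow> 'b::topological_space"
  assumes "continuous_on {a..c} h" "a \<le> c" "B \<in> sets borel"
  shows "{t\<in>{a..c}. h t \<in> B} \<in> sets lebesgue"
proof -
  let ?cl = "\<lambda>t. max a (min c t)"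
  have cl: "continuous_on UNIV ?cl" by (intro continuous_intros)
  have "continuous_on UNIV (h \<circ> ?cl)"
    by (rule continuous_on_compose[OF cl continuous_on_subset[OF assms(1)]]) (use assms(2) in auto)
  then have "h \<circ> ?cl \<in> borel_measurable borel" by (rule borel_measurable_continuous_onI)
  then have "(h \<circ> ?cl) -` B \<inter> space borel \<in> sets borel" using assms(3) by (rule measurable_sets)
  then have "{a..c} \<inter> ((h \<circ> ?cl) -` B) \<in> sets borel" by auto
  moreover have "{a..c} \<inter> ((h \<circ> ?cl) -` B) = {t\<in>{a..c}. h t \<in> B}"
    by auto
  ultimately show ?thesis by (metis sets_completionI_sets sets_lborel)
qed

lemma cont_preimage_borel:
  fixes h :: "real \<Rightarrow> 'b::topological_space"
  assumes "continuous_on {a..c} h" "a \<le> c" "B \<in> sets borel"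
  shows "{t\<in>{a..c}. h t \<in> B} \<in> sets borel"
proof -
  let ?cl = "\<lambda>t. max a (min c t)"
  have cl: "continuous_on UNIV ?cl" by (intro continuous_intros)
  have "continuous_on UNIV (h \<circ> ?cl)"
    by (rule continuous_on_compose[OF cl continuous_on_subset[OF assms(1)]]) (use assms(2) in auto)
  then have "h \<circ> ?cl \<in> borel_measurable borel" by (rule borel_measurable_continuous_onI)
  then have "(h \<circ> ?cl) -` B \<inter> space borel \<in> sets borel" using assms(3) by (rule measurable_sets)
  then have "{a..c} \<inter> ((h \<circ> ?cl) -` B) \<in> sets borel" by auto
  moreover have "{a..c} \<inter> ((h \<circ> ?cl) -` B) = {t\<in>{a..c}. h t \<in> B}"
    by auto
  ultimately show ?thesis by simp
qed

locale traj =
  fixes f g :: "real \<Rightarrow> real^2" and b :: "real^2 \<Rightarrow> real^2"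
    and L T C1 C2 :: real and \<sigma> :: "real \<Rightarrow> real" and N1 N2 :: "real set"
  assumes L_pos: "0 < L" and T_pos: "0 < T"
  and lipf: "C1-lipschitz_on {0..L} f" and lipg: "C2-lipschitz_on {0..T} g"
  and N1: "N1 \<in> null_sets lborel" and N2: "N2 \<in> null_sets lborel"
  and odef: "\<And>s. s \<in> {0..L} \<Longrightarrow> s \<notin> N1 \<Longrightarrow> (f has_vector_derivative b (f s)) (at s within {0..L})"
  and odeg: "\<And>t. t \<in> {0..T} \<Longrightarrow> t \<notin> N2 \<Longrightarrow> (g has_vector_derivative b (g t)) (at t within {0..T})"
  and injf: "inj_on f {0..L}"
  and sig_range: "\<And>t. t\<in>{0..T} \<Longrightarrow> \<sigma> t \<in> {0..L}"
  and sig_cont: "continuous_on {0..T} \<sigma>"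
  and gf: "\<And>t y. t \<in> {0..T} \<Longrightarrow> y \<in> {0..T} \<Longrightarrow> g y - g t = f (\<sigma> y) - f (\<sigma> t)"
  and bgf: "\<And>t. t\<in>{0..T} \<Longrightarrow> b (g t) = b (f (\<sigma> t))"
  and b_borel: "b \<in> borel_measurable borel"
begin

definition "D = {s\<in>{0..L}. s \<notin> N1 \<and> b (f s) \<noteq> 0}"
definition "A1 = {t\<in>{0..T}. t \<notin> N2 \<and> \<sigma> t \<in> D}"

lemma negN1: "negligible N1" and negN2: "negligible N2"
  using N1 N2 by (auto simp: negligible_iff_null_sets intro: null_sets_completionI)

lemma C1_nonneg: "C1 \<ge> 0" and C2_nonneg: "C2 \<ge> 0"
  using lipf lipg by (auto simp: lipschitz_on_def)

lemma lipf': "x \<in> {0..L} \<Longrightarrow> y \<in> {0..L} \<Longrightarrow> norm (f y - f x) \<le> C1 * \<bar>y - x\<bar>"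
  using lipf by (auto simp: lipschitz_on_def dist_norm)
lemma lipg': "x \<in> {0..T} \<Longrightarrow> y \<in> {0..T} \<Longrightarrow> norm (g y - g x) \<le> C2 * \<bar>y - x\<bar>"
  using lipg by (auto simp: lipschitz_on_def dist_norm)

lemma derf:
  assumes "s \<in> {0..L}" "s \<notin> N1" "e > 0"
  shows "\<exists>d>0. \<forall>y\<in>{0..L}. \<bar>y - s\<bar> < d \<longrightarrow> norm (f y - f s - (y - s) *\<^sub>R b (f s)) \<le> e * \<bar>y - s\<bar>"
  using odef[OF assms(1,2)] assms(3) unfolding has_vector_derivative_def has_derivative_within_alt
  by (auto simp: real_norm_def)

lemma derg:
  assumes "t \<in> {0..T}" "t \<notin> N2" "e > 0"
  shows "\<exists>d>0. \<forall>y\<in>{0..T}. \<bar>y - t\<bar> < d \<longrightarrow> norm (g y - g t - (y - t) *\<^sub>R b (g t)) \<le> e * \<bar>y - t\<bar>"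
  using odeg[OF assms(1,2)] assms(3) unfolding has_vector_derivative_def has_derivative_within_alt
  by (auto simp: real_norm_def)

lemma sigc:
  assumes "t \<in> {0..T}" "e > 0"
  shows "\<exists>d>0. \<forall>y\<in>{0..T}. \<bar>y - t\<bar> < d \<longrightarrow> \<bar>\<sigma> y - \<sigma> t\<bar> < e"
  using sig_cont assms unfolding continuous_on_iff by (auto simp: dist_real_def)

lemma deriv1:
  assumes t: "t \<in> A1" and e: "e > 0"
  shows "\<exists>d>0. \<forall>y\<in>{0..T}. \<bar>y - t\<bar> < d \<longrightarrow> \<bar>\<sigma> y - \<sigma> t - (y - t)\<bar> \<le> e * \<bar>y - t\<bar>"
proof -
  define s where "s = \<sigma> t"
  define v where "v = b (f s)"
  have t0: "t \<in> {0..T}" "t \<notin> N2" and sD: "s \<in> D" using t by (auto simp: A1_def s_def)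
  have s0: "s \<in> {0..L}" "s \<notin> N1" and v0: "v \<noteq> 0" using sD by (auto simp: D_def v_def)
  have bg: "b (g t) = v" using bgf[OF t0(1)] by (simp add: v_def s_def)
  define nv where "nv = norm v"
  have nv: "nv > 0" using v0 by (simp add: nv_def)
  define \<epsilon> where "\<epsilon> = e * nv / (2 + e)"
  have \<epsilon>: "\<epsilon> > 0" using e nv by (simp add: \<epsilon>_def)
  obtain d1 where d1: "d1 > 0" "\<forall>y\<in>{0..T}. \<bar>y - t\<bar> < d1 \<longrightarrow> norm (g y - g t - (y - t) *\<^sub>R v) \<le> \<epsilon> * \<bar>y - t\<bar>"
    using derg[OF t0 \<epsilon>] bg by auto
  obtain d2 where d2: "d2 > 0" "\<forall>y\<in>{0..L}. \<bar>y - s\<bar> < d2 \<longrightarrow> norm (f y - f s - (y - s) *\<^sub>R v) \<le> \<epsilon> * \<bar>y - s\<bar>"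
    using derf[OF s0 \<epsilon>] by (auto simp: v_def)
  obtain d3 where d3: "d3 > 0" "\<forall>y\<in>{0..T}. \<bar>y - t\<bar> < d3 \<longrightarrow> \<bar>\<sigma> y - \<sigma> t\<bar> < d2"
    using sigc[OF t0(1) d2(1)] by auto
  show ?thesis
  proof (intro exI[of _ "min d1 d3"] conjI ballI impI)
    show "min d1 d3 > 0" using d1 d3 by simp
    fix y assume y: "y \<in> {0..T}" "\<bar>y - t\<bar> < min d1 d3"
    define u where "u = y - t"
    define w where "w = \<sigma> y - s"
    have n1: "norm (g y - g t - u *\<^sub>R v) \<le> \<epsilon> * \<bar>u\<bar>" using d1 y by (simp add: u_def)
    have n2: "norm (f (\<sigma> y) - f s - w *\<^sub>R v) \<le> \<epsilon> * \<bar>w\<bar>"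
      using d2(2) sig_range[OF y(1)] d3(2) y by (simp add: w_def s_def)
    have eq: "g y - g t = f (\<sigma> y) - f s" using gf[OF t0(1) y(1)] by (simp add: s_def)
    have "(u - w) *\<^sub>R v = (f (\<sigma> y) - f s - w *\<^sub>R v) - (g y - g t - u *\<^sub>R v)"
      by (simp add: eq algebra_simps)
    then have "norm ((u - w) *\<^sub>R v) \<le> norm (f (\<sigma> y) - f s - w *\<^sub>R v) + norm (g y - g t - u *\<^sub>R v)"
      by (simp only: norm_triangle_ineq4)
    then have "norm ((u - w) *\<^sub>R v) \<le> \<epsilon> * \<bar>w\<bar> + \<epsilon> * \<bar>u\<bar>"
      using n1 n2 by linarith
    then have X: "\<bar>w - u\<bar> * nv \<le> \<epsilon> * (2 * \<bar>u\<bar> + \<bar>w - u\<bar>)"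
    proof -
      assume a: "norm ((u - w) *\<^sub>R v) \<le> \<epsilon> * \<bar>w\<bar> + \<epsilon> * \<bar>u\<bar>"
      have "\<bar>w\<bar> \<le> \<bar>u\<bar> + \<bar>w - u\<bar>" by linarith
      then have "\<epsilon> * \<bar>w\<bar> \<le> \<epsilon> * (\<bar>u\<bar> + \<bar>w - u\<bar>)" using \<epsilon> by (intro mult_left_mono) auto
      moreover have "norm ((u - w) *\<^sub>R v) = \<bar>w - u\<bar> * nv" by (simp add: nv_def abs_minus_commute)
      ultimately show ?thesis using a by (simp add: algebra_simps)
    qed
    define a where "a = \<bar>w - u\<bar> * nv"
    have eps: "\<epsilon> * (2 + e) = e * nv" using e by (simp add: \<epsilon>_def)
    have "a * (2 + e) \<le> \<epsilon> * (2 * \<bar>u\<bar> + \<bar>w - u\<bar>) * (2 + e)"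
      using mult_right_mono[OF X, of "2 + e"] e by (simp add: a_def)
    also have "\<dots> = (\<epsilon> * (2 + e)) * (2 * \<bar>u\<bar>) + (\<epsilon> * (2 + e)) * \<bar>w - u\<bar>"
      by (simp add: algebra_simps)
    also have "\<dots> = e * nv * (2 * \<bar>u\<bar>) + e * a" by (simp add: eps a_def)
    finally have "2 * a + e * a \<le> e * nv * (2 * \<bar>u\<bar>) + e * a" by (simp add: algebra_simps)
    then have "a \<le> e * \<bar>u\<bar> * nv" by (simp add: algebra_simps)
    then have "\<bar>w - u\<bar> * nv \<le> e * \<bar>u\<bar> * nv" by (simp add: a_def)
    then have "\<bar>w - u\<bar> \<le> e * \<bar>u\<bar>" using nv by simp
    then show "\<bar>\<sigma> y - \<sigma> t - (y - t)\<bar> \<le> e * \<bar>y - t\<bar>" by (simp add: u_def w_def s_def)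
  qed
qed

lemma right_up:
  assumes t: "t \<in> A1" and c: "t < c" "c \<le> T"
  shows "\<exists>z. t < z \<and> z \<le> c \<and> \<sigma> t < \<sigma> z"
proof -
  obtain d where d: "d > 0" "\<forall>y\<in>{0..T}. \<bar>y - t\<bar> < d \<longrightarrow> \<bar>\<sigma> y - \<sigma> t - (y - t)\<bar> \<le> 1/2 * \<bar>y - t\<bar>"
    using deriv1[OF t, of "1/2"] by auto
  have t0: "t \<in> {0..T}" using t by (auto simp: A1_def)
  obtain m where m: "m \<le> c - t" "m \<le> d" "0 < m" using d c by (intro that[of "min d (c - t)"]) auto
  define z where "z = t + m / 2"
  have z: "t < z" "z \<le> c" "z \<in> {0..T}" "\<bar>z - t\<bar> < d"
    using m c t0 unfolding z_def by auto
  have "\<bar>\<sigma> z - \<sigma> t - (z - t)\<bar> \<le> 1/2 * \<bar>z - t\<bar>" using d z by blast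
  then have "\<sigma> z > \<sigma> t" using z by (auto simp: abs_if split: if_splits)
  then show ?thesis using z by blast
qed


lemma sig_lip_at:
  assumes t: "t \<in> {0..T}" and sD: "\<sigma> t \<in> D"
  shows "\<exists>d>0. \<exists>B. \<forall>y\<in>{0..T}. \<bar>y - t\<bar> < d \<longrightarrow> \<bar>\<sigma> y - \<sigma> t\<bar> \<le> B * \<bar>y - t\<bar>"
proof -
  define s where "s = \<sigma> t"
  define v where "v = b (f s)"
  have s0: "s \<in> {0..L}" "s \<notin> N1" and v0: "v \<noteq> 0" using sD by (auto simp: D_def v_def s_def)
  define nv where "nv = norm v"
  have nv: "nv > 0" using v0 by (simp add: nv_def)
  obtain d2 where d2: "d2 > 0" "\<forall>y\<in>{0..L}. \<bar>y - s\<bar> < d2 \<longrightarrow> norm (f y - f s - (y - s) *\<^sub>R v) \<le> nv/2 * \<bar>y - s\<bar>"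
    using derf[OF s0, of "nv/2"] nv by (auto simp: v_def)
  obtain d3 where d3: "d3 > 0" "\<forall>y\<in>{0..T}. \<bar>y - t\<bar> < d3 \<longrightarrow> \<bar>\<sigma> y - \<sigma> t\<bar> < d2"
    using sigc[OF t d2(1)] by auto
  show ?thesis
  proof (rule exI[of _ d3], intro conjI exI[of _ "2 * C2 / nv"] ballI impI)
    show "d3 > 0" by fact
    fix y assume y: "y \<in> {0..T}" "\<bar>y - t\<bar> < d3"
    define w where "w = \<sigma> y - s"
    have n2: "norm (f (\<sigma> y) - f s - w *\<^sub>R v) \<le> nv/2 * \<bar>w\<bar>"
      using d2(2) sig_range[OF y(1)] d3(2) y by (simp add: w_def s_def)
    have "norm (w *\<^sub>R v) \<le> norm (f (\<sigma> y) - f s) + norm (f (\<sigma> y) - f s - w *\<^sub>R v)"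
      by (metis norm_triangle_ineq4 diff_diff_eq2 diff_self diff_zero norm_minus_commute add.commute
          norm_triangle_sub)
    moreover have "norm (w *\<^sub>R v) = \<bar>w\<bar> * nv" by (simp add: nv_def)
    moreover have "norm (f (\<sigma> y) - f s) \<le> C2 * \<bar>y - t\<bar>"
      using lipg'[OF t y(1)] gf[OF t y(1)] by (simp add: s_def)
    moreover have "nv/2 * \<bar>w\<bar> = \<bar>w\<bar> * nv - \<bar>w\<bar> * nv / 2" by simp
    ultimately have "\<bar>w\<bar> * nv / 2 \<le> C2 * \<bar>y - t\<bar>" using n2 by linarith
    then have "\<bar>w\<bar> * nv \<le> 2 * C2 * \<bar>y - t\<bar>" by simp
    then have "\<bar>w\<bar> \<le> 2 * C2 * \<bar>y - t\<bar> / nv" using nv by (simp add: field_simps)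
    then show "\<bar>\<sigma> y - \<sigma> t\<bar> \<le> 2 * C2 / nv * \<bar>y - t\<bar>" by (simp add: w_def s_def)
  qed
qed

lemma negW: "negligible (\<sigma> ` {t\<in>{0..T}. t \<in> N2 \<and> \<sigma> t \<in> D})"
proof (rule negl_lip_img)
  show "negligible {t\<in>{0..T}. t \<in> N2 \<and> \<sigma> t \<in> D}"
    by (rule negligible_subset[OF negN2]) auto
  fix x assume x: "x \<in> {t\<in>{0..T}. t \<in> N2 \<and> \<sigma> t \<in> D}"
  then obtain d B where "d > 0" "\<forall>y\<in>{0..T}. \<bar>y - x\<bar> < d \<longrightarrow> \<bar>\<sigma> y - \<sigma> x\<bar> \<le> B * \<bar>y - x\<bar>"
    using sig_lip_at[of x] by auto
  then show "\<exists>d>0. \<exists>B. \<forall>y\<in>{t\<in>{0..T}. t \<in> N2 \<and> \<sigma> t \<in> D}. \<bar>y - x\<bar> < d \<longrightarrow> \<bar>\<sigma> y - \<sigma> x\<bar> \<le> B * \<bar>y - x\<bar>"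
    by blast
qed


lemma posD:
  assumes pq: "p \<in> {0..L}" "q \<in> {0..L}" "p < q"
  shows "\<not> negligible (D \<inter> {p<..<q})"
proof
  assume neg: "negligible (D \<inter> {p<..<q})"
  have comp: "f p $ i = f q $ i" for i
  proof -
    define \<phi> where "\<phi> = (\<lambda>s. f s $ i)"
    have lip\<phi>: "\<bar>\<phi> y - \<phi> x\<bar> \<le> C1 * \<bar>y - x\<bar>" if "x\<in>{0..L}" "y\<in>{0..L}" for x y
      using component_le_norm_cart[of "f y - f x" i] lipf'[OF that] by (simp add: \<phi>_def)
    let ?O = "{p<..<q}"
    let ?Z = "{s\<in>?O. s \<notin> N1 \<and> b (f s) = 0}"
    have sub: "?O \<subseteq> (D \<inter> ?O) \<union> (N1 \<inter> ?O) \<union> ?Z" using pq by (auto simp: D_def)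
    have OL: "?O \<subseteq> {0..L}" using pq by auto
    have n1: "negligible (\<phi> ` (D \<inter> ?O))"
      by (rule negl_lip_img_glob[OF neg, where B=C1]) (rule lip\<phi>; use OL in auto)
    have n2: "negligible (\<phi> ` (N1 \<inter> ?O))"
    proof -
      have "negligible (N1 \<inter> ?O)" by (rule negligible_subset[OF negN1]) auto
      then show ?thesis by (rule negl_lip_img_glob[where B=C1]) (rule lip\<phi>; use OL in auto)
    qed
    have n3: "negligible (\<phi> ` ?Z)"
    proof (rule negl_deriv0_img)
      fix x e assume x: "x \<in> ?Z" and e: "(e::real) > 0"
      then have x0: "x \<in> {0..L}" "x \<notin> N1" "b (f x) = 0" using OL by auto
      obtain d where d: "d > 0" "\<forall>y\<in>{0..L}. \<bar>y - x\<bar> < d \<longrightarrow> norm (f y - f x - (y - x) *\<^sub>R b (f x)) \<le> e * \<bar>y - x\<bar>"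
        using derf[OF x0(1,2) e] by auto
      show "\<exists>d>0. \<forall>y\<in>?Z. \<bar>y - x\<bar> < d \<longrightarrow> \<bar>\<phi> y - \<phi> x\<bar> \<le> e * \<bar>y - x\<bar>"
      proof (rule exI[of _ d], intro conjI ballI impI)
        fix y assume y: "y \<in> ?Z" "\<bar>y - x\<bar> < d"
        then have "norm (f y - f x) \<le> e * \<bar>y - x\<bar>" using d x0 OL by auto
        then show "\<bar>\<phi> y - \<phi> x\<bar> \<le> e * \<bar>y - x\<bar>"
          using component_le_norm_cart[of "f y - f x" i] by (simp add: \<phi>_def)
      qed (use d in auto)
    qed
    have negO: "negligible (\<phi> ` ?O)"
      by (rule negligible_subset[of "\<phi> ` (D \<inter> ?O) \<union> \<phi> ` (N1 \<inter> ?O) \<union> \<phi> ` ?Z"])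
         (use n1 n2 n3 in \<open>simp add: negligible_Un\<close>, use sub in blast)
    have "\<phi> ` {p..q} \<subseteq> \<phi> ` ?O \<union> {\<phi> p, \<phi> q}"
    proof
      fix y assume "y \<in> \<phi> ` {p..q}"
      then obtain s where s: "s \<in> {p..q}" "y = \<phi> s" by auto
      then show "y \<in> \<phi> ` ?O \<union> {\<phi> p, \<phi> q}"
      proof (cases "s = p \<or> s = q")
        case True then show ?thesis using s by blast
      next
        case False then have "s \<in> ?O" using s by auto
        then show ?thesis using s by blast
      qed
    qed
    then have negI: "negligible (\<phi> ` {p..q})"
      by (rule negligible_subset[rotated]) (use negO in \<open>simp add: negligible_Un\<close>)
    have "C1-lipschitz_on {p..q} \<phi>"
      unfolding lipschitz_on_def dist_real_def
    proof (intro conjI C1_nonneg ballI)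
      fix x y assume "x \<in> {p..q}" "y \<in> {p..q}"
      then have "x \<in> {0..L}" "y \<in> {0..L}" using pq by auto
      then show "\<bar>\<phi> x - \<phi> y\<bar> \<le> C1 * \<bar>x - y\<bar>" using lip\<phi> by blast
    qed
    then have cont: "continuous_on {p..q} \<phi>" by (rule lipschitz_on_continuous_on)
    have "{min (\<phi> p) (\<phi> q) .. max (\<phi> p) (\<phi> q)} \<subseteq> \<phi> ` {p..q}"
    proof
      fix y assume y: "y \<in> {min (\<phi> p) (\<phi> q) .. max (\<phi> p) (\<phi> q)}"
      show "y \<in> \<phi> ` {p..q}"
      proof (cases "\<phi> p \<le> \<phi> q")
        case True
        then obtain x where "p \<le> x" "x \<le> q" "\<phi> x = y"
          using IVT'[of \<phi> p y q] y cont pq by auto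
        then show ?thesis by force
      next
        case False
        then obtain x where "p \<le> x" "x \<le> q" "\<phi> x = y"
          using IVT2'[of \<phi> q y p] y cont pq by auto
        then show ?thesis by force
      qed
    qed
    then have "negligible {min (\<phi> p) (\<phi> q) .. max (\<phi> p) (\<phi> q)}"
      using negI negligible_subset by blast
    then have "max (\<phi> p) (\<phi> q) \<le> min (\<phi> p) (\<phi> q)"
      using negligible_interval(1)[of "min (\<phi> p) (\<phi> q)" "max (\<phi> p) (\<phi> q)"] by simp
    then show ?thesis by (simp add: \<phi>_def)
  qed
  then have "f p = f q" by (simp add: vec_eq_iff)
  moreover have "p \<noteq> q" using pq by simp
  ultimately show False using injf pq unfolding inj_on_def by blast
qed


lemma mono_sig:
  assumes ac: "a \<in> {0..T}" "c \<in> {0..T}" "a \<le> c"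
  shows "\<sigma> a \<le> \<sigma> c"
proof (rule ccontr)
  assume "\<not> \<sigma> a \<le> \<sigma> c"
  then have lt: "\<sigma> c < \<sigma> a" by simp
  have contac: "continuous_on {a..c} \<sigma>"
    by (rule continuous_on_subset[OF sig_cont]) (use ac in auto)
  have sub: "D \<inter> {\<sigma> c<..<\<sigma> a} \<subseteq> \<sigma> ` {t\<in>{0..T}. t \<in> N2 \<and> \<sigma> t \<in> D}"
  proof
    fix y assume y: "y \<in> D \<inter> {\<sigma> c<..<\<sigma> a}"
    let ?K = "{t\<in>{a..c}. \<sigma> t = y}"
    have Kne: "?K \<noteq> {}" using IVT2'[of \<sigma> c y a] y contac ac by auto
    have Kcl: "closed ?K" by (rule continuous_closed_preimage_constant[OF contac closed_atLeastAtMost])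
    have Kbd: "bdd_above ?K" by (rule bdd_aboveI[of _ c]) auto
    define ty where "ty = Sup ?K"
    have tyK: "ty \<in> ?K" using closed_contains_Sup[OF Kne Kbd Kcl] ty_def by simp
    have tymax: "t \<le> ty" if "t \<in> ?K" for t using cSup_upper[OF that Kbd] ty_def by simp
    have "ty \<noteq> c" using tyK y by auto
    then have tyc: "ty < c" using tyK by auto
    have ty0: "ty \<in> {0..T}" using tyK ac by auto
    have "ty \<in> N2"
    proof (rule ccontr)
      assume "ty \<notin> N2"
      then have "ty \<in> A1" using ty0 tyK y by (auto simp: A1_def)
      from right_up[OF this tyc] ac obtain z where z: "ty < z" "z \<le> c" "\<sigma> ty < \<sigma> z" by auto
      have "continuous_on {z..c} \<sigma>"
        by (rule continuous_on_subset[OF contac]) (use z tyK in auto)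
      then obtain x where x: "z \<le> x" "x \<le> c" "\<sigma> x = y"
        using IVT2'[of \<sigma> c y z] y z tyK by auto
      then have "x \<in> ?K" using z tyK by auto
      then have "x \<le> ty" by (rule tymax)
      then show False using x z by simp
    qed
    then show "y \<in> \<sigma> ` {t\<in>{0..T}. t \<in> N2 \<and> \<sigma> t \<in> D}"
      using tyK ty0 y by (intro image_eqI[of _ _ ty]) auto
  qed
  then have "negligible (D \<inter> {\<sigma> c<..<\<sigma> a})" using negW negligible_subset by blast
  moreover have "\<sigma> c \<in> {0..L}" "\<sigma> a \<in> {0..L}" using sig_range ac by auto
  ultimately show False using posD lt by blast
qed

lemma strict_A1:
  assumes "t \<in> A1" "t' \<in> A1" "t < t'"
  shows "\<sigma> t < \<sigma> t'"
proof -
  have t': "t' \<in> {0..T}" using assms by (auto simp: A1_def)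
  obtain z where z: "t < z" "z \<le> t'" "\<sigma> t < \<sigma> z" using right_up[OF assms(1,3)] t' by auto
  have "z \<in> {0..T}" using z t' assms(1) by (auto simp: A1_def)
  then have "\<sigma> z \<le> \<sigma> t'" using mono_sig t' z by blast
  then show ?thesis using z by simp
qed

lemma inj_A1: "inj_on \<sigma> A1"
proof (rule inj_onI)
  fix x y assume xy: "x \<in> A1" "y \<in> A1" "\<sigma> x = \<sigma> y"
  show "x = y"
  proof (rule ccontr)
    assume "x \<noteq> y"
    then consider "x < y" | "y < x" by linarith
    then show False
      by cases (use strict_A1 xy in fastforce)+
  qed
qed


lemma contf: "continuous_on {0..L} f" using lipf by (rule lipschitz_on_continuous_on)
lemma contg: "continuous_on {0..T} g" using lipg by (rule lipschitz_on_continuous_on)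

lemma Bz: "{x. b x \<noteq> 0} \<in> sets borel"
proof -
  have "b -` (- {0}) \<inter> space borel \<in> sets borel"
    by (rule measurable_sets[OF b_borel]) (simp add: borel_open)
  moreover have "b -` (- {0}) \<inter> space borel = {x. b x \<noteq> 0}" by auto
  ultimately show ?thesis by simp
qed

lemma N1b: "N1 \<in> sets borel" and N2b: "N2 \<in> sets borel"
  using N1 N2 by (auto dest: null_setsD2)

lemma D_borel: "D \<in> sets borel"
proof -
  have "{s\<in>{0..L}. f s \<in> {x. b x \<noteq> 0}} \<in> sets borel"
    by (rule cont_preimage_borel[OF contf _ Bz]) (use L_pos in simp)
  moreover have "D = {s\<in>{0..L}. f s \<in> {x. b x \<noteq> 0}} - N1" by (auto simp: D_def)
  ultimately show ?thesis using N1b by simp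
qed

lemma A1_borel: "A1 \<in> sets borel"
proof -
  have "{t\<in>{0..T}. \<sigma> t \<in> D} \<in> sets borel"
    by (rule cont_preimage_borel[OF sig_cont _ D_borel]) (use T_pos in simp)
  moreover have "A1 = {t\<in>{0..T}. \<sigma> t \<in> D} - N2" by (auto simp: A1_def)
  ultimately show ?thesis using N2b by simp
qed

lemma A1_lmeas: "A1 \<in> lmeasurable"
  by (rule bounded_set_imp_lmeasurable)
     (use A1_borel in \<open>auto simp: A1_def intro: bounded_subset[of "{0..T}"]\<close>)

lemma measure_A1: "measure lebesgue A1 \<le> L"
proof -
  have der: "(\<sigma> has_field_derivative 1) (at t within A1)" if t: "t \<in> A1" for t
  proof -
    have "(\<sigma> has_derivative (*) 1) (at t within {0..T})"
      unfolding has_derivative_within_alt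
    proof (intro conjI allI impI)
      show "bounded_linear ((*) (1::real))" by (rule bounded_linear_mult_right)
      fix e :: real assume "e > 0"
      from deriv1[OF t this] show "\<exists>d>0. \<forall>y\<in>{0..T}. norm (y - t) < d \<longrightarrow> norm (\<sigma> y - \<sigma> t - 1 * (y - t)) \<le> e * norm (y - t)"
        by simp
    qed
    then have "(\<sigma> has_field_derivative 1) (at t within {0..T})" by (simp add: has_field_derivative_def)
    then show ?thesis by (rule DERIV_subset) (auto simp: A1_def)
  qed
  have A1s: "A1 \<in> sets lebesgue" using A1_lmeas by (simp add: fmeasurableD)
  have cov: "(\<lambda>x. \<bar>1\<bar> *\<^sub>R (\<lambda>_. 1::real) (\<sigma> x)) absolutely_integrable_on A1 \<and>
        integral A1 (\<lambda>x. \<bar>1\<bar> *\<^sub>R (\<lambda>_. 1::real) (\<sigma> x)) = measure lebesgue A1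
     \<longleftrightarrow> (\<lambda>_. 1::real) absolutely_integrable_on \<sigma> ` A1 \<and> integral (\<sigma> ` A1) (\<lambda>_. 1::real) = measure lebesgue A1"
    by (rule has_absolute_integral_change_of_variables_real[OF A1s der inj_A1])
  have "(\<lambda>_. 1::real) integrable_on A1" using A1_lmeas lmeasurable_iff_integrable_on by blast
  then have "(\<lambda>_. 1::real) absolutely_integrable_on A1"
    by (subst absolutely_integrable_on_iff_nonneg) auto
  moreover have "integral A1 (\<lambda>_. 1::real) = measure lebesgue A1"
    using lmeasure_integral[OF A1_lmeas] by simp
  ultimately have "(\<lambda>_. 1::real) absolutely_integrable_on \<sigma> ` A1 \<and> integral (\<sigma> ` A1) (\<lambda>_. 1::real) = measure lebesgue A1"
    using cov by simp
  then have im: "\<sigma> ` A1 \<in> lmeasurable" "measure lebesgue (\<sigma> ` A1) = measure lebesgue A1"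
    using lmeasurable_iff_integrable_on lmeasure_integral set_lebesgue_integral_eq_integral(1) by metis+
  have "\<sigma> ` A1 \<subseteq> {0..L}" using sig_range by (auto simp: A1_def)
  then have "measure lebesgue (\<sigma> ` A1) \<le> measure lebesgue {0..L}"
    by (intro measure_mono_fmeasurable) (use im in \<open>auto simp: fmeasurableD\<close>)
  also have "\<dots> = L" using L_pos by (simp add: measure_completion)
  finally show ?thesis using im by simp
qed


definition "E = {t\<in>{0..T}. t \<notin> N2 \<and> b (g t) \<noteq> 0 \<and> \<sigma> t \<in> N1}"

definition "P n m = {t\<in>E. (\<forall>y\<in>{0..T}. \<bar>y - t\<bar> < 1 / real (Suc n) \<longrightarrow> \<bar>y - t\<bar> \<le> real (Suc n) * \<bar>\<sigma> y - \<sigma> t\<bar>)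
     \<and> real m / real (Suc n) \<le> t \<and> t < real (Suc m) / real (Suc n)}"

lemma E_local:
  assumes t: "t \<in> E"
  shows "\<exists>n. \<forall>y\<in>{0..T}. \<bar>y - t\<bar> < 1 / real (Suc n) \<longrightarrow> \<bar>y - t\<bar> \<le> real (Suc n) * \<bar>\<sigma> y - \<sigma> t\<bar>"
proof -
  have t0: "t \<in> {0..T}" "t \<notin> N2" "b (g t) \<noteq> 0" using t by (auto simp: E_def)
  define v where "v = b (g t)"
  define nv where "nv = norm v"
  have nv: "nv > 0" using t0 by (simp add: nv_def v_def)
  obtain d where d: "d > 0" "\<forall>y\<in>{0..T}. \<bar>y - t\<bar> < d \<longrightarrow> norm (g y - g t - (y - t) *\<^sub>R v) \<le> nv/2 * \<bar>y - t\<bar>"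
    using derg[OF t0(1,2), of "nv/2"] nv by (auto simp: v_def)
  obtain n where n: "max (2 * C1 / nv) (1 / d) \<le> real n" using real_arch_simple by blast
  have n1: "2 * C1 / nv \<le> real (Suc n)" using n by simp
  have "1 / d < real (Suc n)" using n by simp
  then have n2: "1 / real (Suc n) < d" using d(1) by (simp add: field_simps)
  show ?thesis
  proof (rule exI[of _ n], intro ballI impI)
    fix y assume y: "y \<in> {0..T}" "\<bar>y - t\<bar> < 1 / real (Suc n)"
    have n3: "norm (g y - g t - (y - t) *\<^sub>R v) \<le> nv/2 * \<bar>y - t\<bar>" using d(2) y n2 by auto
    have "norm ((y - t) *\<^sub>R v) \<le> norm (g y - g t) + norm (g y - g t - (y - t) *\<^sub>R v)"
      by (metis norm_triangle_ineq4 diff_diff_eq2 diff_self diff_zero norm_minus_commute add.commute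
          norm_triangle_sub)
    moreover have "norm ((y - t) *\<^sub>R v) = \<bar>y - t\<bar> * nv" by (simp add: nv_def)
    moreover have "norm (g y - g t) \<le> C1 * \<bar>\<sigma> y - \<sigma> t\<bar>"
      using lipf'[OF sig_range[OF t0(1)] sig_range[OF y(1)]] gf[OF t0(1) y(1)] by simp
    moreover have "nv/2 * \<bar>y - t\<bar> = \<bar>y - t\<bar> * nv - \<bar>y - t\<bar> * nv / 2" by simp
    ultimately have "\<bar>y - t\<bar> * nv / 2 \<le> C1 * \<bar>\<sigma> y - \<sigma> t\<bar>" using n3 by linarith
    then have "\<bar>y - t\<bar> \<le> (2 * C1 / nv) * \<bar>\<sigma> y - \<sigma> t\<bar>" using nv by (simp add: field_simps)
    also have "\<dots> \<le> real (Suc n) * \<bar>\<sigma> y - \<sigma> t\<bar>" by (rule mult_right_mono[OF n1]) simp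
    finally show "\<bar>y - t\<bar> \<le> real (Suc n) * \<bar>\<sigma> y - \<sigma> t\<bar>" .
  qed
qed

lemma E_cover: "E \<subseteq> (\<Union>nm. P (fst nm) (snd nm))"
proof
  fix t assume t: "t \<in> E"
  then obtain n where n: "\<forall>y\<in>{0..T}. \<bar>y - t\<bar> < 1 / real (Suc n) \<longrightarrow> \<bar>y - t\<bar> \<le> real (Suc n) * \<bar>\<sigma> y - \<sigma> t\<bar>"
    using E_local by blast
  have t0: "0 \<le> t" using t by (auto simp: E_def)
  define m where "m = nat \<lfloor>t * real (Suc n)\<rfloor>"
  have fl: "real m = of_int \<lfloor>t * real (Suc n)\<rfloor>" using t0 by (simp add: m_def)
  have "real m \<le> t * real (Suc n)" "t * real (Suc n) < real m + 1"
    using fl of_int_floor_le[of "t * real (Suc n)"] real_of_int_floor_add_one_gt[of "t * real (Suc n)"] by linarith+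
  then have "real m / real (Suc n) \<le> t" "t < real (Suc m) / real (Suc n)"
    by (simp_all add: field_simps)
  then have "t \<in> P n m" using t n by (simp add: P_def)
  then show "t \<in> (\<Union>nm. P (fst nm) (snd nm))" by (intro UN_I[of "(n, m)"]) auto
qed

lemma P_neg: "negligible (P n m)"
proof -
  let ?P = "P n m"
  have close: "\<bar>t' - t\<bar> \<le> real (Suc n) * \<bar>\<sigma> t' - \<sigma> t\<bar>" if "t \<in> ?P" "t' \<in> ?P" for t t'
  proof -
    have "\<bar>t' - t\<bar> < 1 / real (Suc n)"
    proof -
      have "real m / real (Suc n) \<le> t" "t < real (Suc m) / real (Suc n)"
           "real m / real (Suc n) \<le> t'" "t' < real (Suc m) / real (Suc n)"
        using that by (auto simp: P_def)
      moreover have "real (Suc m) / real (Suc n) = real m / real (Suc n) + 1 / real (Suc n)"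
        by (simp add: add_divide_distrib)
      ultimately show ?thesis by linarith
    qed
    moreover have "t' \<in> {0..T}" using that by (auto simp: P_def E_def)
    ultimately show ?thesis using that(1) by (auto simp: P_def)
  qed
  have inj: "inj_on \<sigma> ?P"
  proof (rule inj_onI)
    fix x y assume "x \<in> ?P" "y \<in> ?P" "\<sigma> x = \<sigma> y"
    then show "x = y" using close[of x y] by simp
  qed
  have negim: "negligible (\<sigma> ` ?P)"
    by (rule negligible_subset[OF negN1]) (auto simp: P_def E_def)
  have "negligible (inv_into ?P \<sigma> ` (\<sigma> ` ?P))"
  proof (rule negl_lip_img_glob[OF negim, where B = "real (Suc n)"])
    fix x y assume "x \<in> \<sigma> ` ?P" "y \<in> \<sigma> ` ?P"
    then obtain t t' where tt: "t \<in> ?P" "t' \<in> ?P" "x = \<sigma> t" "y = \<sigma> t'" by auto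
    then have "inv_into ?P \<sigma> x = t" "inv_into ?P \<sigma> y = t'" using inj by (auto simp: inv_into_f_f)
    then show "\<bar>inv_into ?P \<sigma> y - inv_into ?P \<sigma> x\<bar> \<le> real (Suc n) * \<bar>y - x\<bar>"
      using close[OF tt(1,2)] tt by simp
  qed
  then show ?thesis using inj by simp
qed

lemma negE: "negligible E"
proof (rule negligible_subset[OF _ E_cover])
  have "(\<Union>nm. P (fst nm) (snd nm)) = \<Union> (range (\<lambda>nm. P (fst nm) (snd nm)))" by simp
  then show "negligible (\<Union>nm. P (fst nm) (snd nm))"
    using negligible_countable_Union[of "range (\<lambda>nm. P (fst nm) (snd nm))"] P_neg by auto
qed

lemma main_loc:
  "measure lebesgue {t\<in>{0..T}. (g has_vector_derivative 0) (at t within {0..T})} \<ge> T - L"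
proof -
  define S0 where "S0 = {t\<in>{0..T}. (g has_vector_derivative 0) (at t within {0..T})}"
  define M where "M = {t\<in>{0..T}. t \<notin> N2 \<and> b (g t) = 0}"
  have MS0: "M \<subseteq> S0"
  proof
    fix t assume t: "t \<in> M"
    then have tt: "b (g t) = 0" "t \<in> {0..T}" "t \<notin> N2" by (auto simp: M_def)
    then have "(g has_vector_derivative b (g t)) (at t within {0..T})" using odeg by blast
    then show "t \<in> S0" using tt by (simp add: S0_def)
  qed
  have S0M: "S0 \<subseteq> M \<union> N2"
  proof
    fix t assume t: "t \<in> S0"
    show "t \<in> M \<union> N2"
    proof (cases "t \<in> N2")
      case False
      have "b (g t) = 0"
        using vector_derivative_unique_within_closed_interval[of 0 T t g "b (g t)" 0] T_pos t False odeg
        by (auto simp: S0_def)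
      then show ?thesis using t False by (auto simp: M_def S0_def)
    qed simp
  qed
  have Mb: "M \<in> sets borel"
  proof -
    have "{t\<in>{0..T}. g t \<in> - {x. b x \<noteq> 0}} \<in> sets borel"
      by (rule cont_preimage_borel[OF contg]) (use T_pos Bz in auto)
    moreover have "M = {t\<in>{0..T}. g t \<in> - {x. b x \<noteq> 0}} - N2" by (auto simp: M_def)
    ultimately show ?thesis using N2b by simp
  qed
  then have Ml: "M \<in> sets lebesgue" by simp
  have "negligible (S0 \<inter> N2)" by (rule negligible_subset[OF negN2]) auto
  then have "S0 \<inter> N2 \<in> sets lebesgue" using negligible_imp_measurable fmeasurableD by blast
  moreover have "S0 = M \<union> (S0 \<inter> N2)" using MS0 S0M by blast
  ultimately have "S0 \<in> sets lebesgue" using Ml by (metis sets.Un)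
  then have S0l: "S0 \<in> lmeasurable"
    by (rule bounded_set_imp_lmeasurable[rotated]) (auto simp: S0_def intro: bounded_subset[of "{0..T}"])
  define Z where "Z = E \<union> (N2 \<inter> {0..T})"
  have negZ: "negligible Z" unfolding Z_def
    by (rule negligible_Un[OF negE negligible_subset[OF negN2]]) auto
  have Zl: "Z \<in> sets lebesgue" using negZ negligible_imp_measurable fmeasurableD by blast
  have A1l: "A1 \<in> sets lebesgue" using A1_lmeas fmeasurableD by blast
  have cover: "{0..T} \<subseteq> M \<union> A1 \<union> Z"
  proof
    fix t assume t: "t \<in> {0..T}"
    show "t \<in> M \<union> A1 \<union> Z"
    proof (cases "t \<in> N2 \<or> b (g t) = 0")
      case True then show ?thesis using t by (auto simp: M_def Z_def)
    next
      case False
      then have "b (f (\<sigma> t)) \<noteq> 0" using bgf[OF t] by simp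
      then show ?thesis using t False sig_range[OF t] by (auto simp: A1_def D_def Z_def E_def)
    qed
  qed
  have "T = measure lebesgue {0..T}" using T_pos by (simp add: measure_completion)
  also have "\<dots> \<le> measure lebesgue (M \<union> A1 \<union> Z)"
  proof (rule measure_mono_fmeasurable[OF cover])
    show "{0..T} \<in> sets lebesgue" by simp
    have "M \<union> A1 \<union> Z \<in> sets lebesgue" using Ml A1l Zl by simp
    moreover have "bounded (M \<union> A1 \<union> Z)"
      by (rule bounded_subset[of "{0..T}"]) (auto simp: M_def A1_def Z_def E_def)
    ultimately show "M \<union> A1 \<union> Z \<in> fmeasurable lebesgue"
      using bounded_set_imp_lmeasurable by blast
  qed
  also have "\<dots> \<le> measure lebesgue (M \<union> A1) + measure lebesgue Z"
    by (rule measure_Un_le) (use Ml A1l Zl in simp_all)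
  also have "\<dots> \<le> measure lebesgue M + measure lebesgue A1 + measure lebesgue Z"
    using measure_Un_le[OF Ml A1l] by simp
  also have "\<dots> \<le> measure lebesgue S0 + L + 0"
  proof -
    have "measure lebesgue M \<le> measure lebesgue S0"
      by (rule measure_mono_fmeasurable[OF MS0 Ml S0l])
    then show ?thesis using measure_A1 negligible_imp_measure0[OF negZ] by simp
  qed
  finally show ?thesis by (simp add: S0_def)
qed

end


lemma Ints_dist1: "(a::real) \<in> \<int> \<Longrightarrow> b \<in> \<int> \<Longrightarrow> a \<noteq> b \<Longrightarrow> 1 \<le> \<bar>a - b\<bar>"
  by (elim Ints_cases) auto

lemma lat_diff: "x \<in> int_lattice \<Longrightarrow> y \<in> int_lattice \<Longrightarrow> x - y \<in> int_lattice"
  by (auto simp: int_lattice_def)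

lemma lat_zero: "0 \<in> int_lattice"
  by (auto simp: int_lattice_def)

lemma lat_closed: "closed int_lattice"
proof -
  have eq: "int_lattice = (\<Inter>i. (\<lambda>x::real^2. x $ i) -` \<int>)" by (auto simp: int_lattice_def)
  have cl: "closed ((\<lambda>x::real^2. x $ i) -` \<int>)" for i
    by (rule continuous_closed_vimage) (auto intro: continuous_intros)
  show ?thesis unfolding eq by (rule closed_INT) (simp add: cl)
qed

theorem mainTheorem11:
  fixes b :: "real^2 \<Rightarrow> real^2" and T :: real
    and \<gamma>1 \<gamma>2 :: "real \<Rightarrow> real^2"
  assumes b_per: "torus_periodic b"
    and b_bdd: "bounded (range b)"
    and b_borel: "b \<in> borel_measurable borel"
    and T_pos: "T > 0"
    and lip1: "\<exists>C. C-lipschitz_on {0..T/2} \<gamma>1"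
    and lip2: "\<exists>C. C-lipschitz_on {0..T} \<gamma>2"
    and ode1: "AE t in lborel. t \<in> {0..T/2} \<longrightarrow>
                 (\<gamma>1 has_vector_derivative b (\<gamma>1 t)) (at t within {0..T/2})"
    and ode2: "AE t in lborel. t \<in> {0..T} \<longrightarrow>
                 (\<gamma>2 has_vector_derivative b (\<gamma>2 t)) (at t within {0..T})"
    and inj1: "\<forall>s\<in>{0..T/2}. \<forall>t\<in>{0..T/2}. \<gamma>1 s - \<gamma>1 t \<in> int_lattice \<longrightarrow> s = t"
    and incl: "\<forall>t\<in>{0..T}. \<exists>s\<in>{0..T/2}. \<gamma>2 t - \<gamma>1 s \<in> int_lattice"
  shows "measure lebesgue {t\<in>{0..T}. (\<gamma>2 has_vector_derivative 0) (at t within {0..T})} \<ge> T / 2"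
proof -
  define L where "L = T / 2"
  obtain C1 where C1: "C1-lipschitz_on {0..L} \<gamma>1" using lip1 L_def by blast
  obtain C2 where C2: "C2-lipschitz_on {0..T} \<gamma>2" using lip2 by blast
  have cont1: "continuous_on {0..L} \<gamma>1" using C1 by (rule lipschitz_on_continuous_on)
  have cont2: "continuous_on {0..T} \<gamma>2" using C2 by (rule lipschitz_on_continuous_on)
  obtain N1 where N1: "{x \<in> space lborel. \<not> (x \<in> {0..L} \<longrightarrow> (\<gamma>1 has_vector_derivative b (\<gamma>1 x)) (at x within {0..L}))} \<subseteq> N1"
      "emeasure lborel N1 = 0" "N1 \<in> sets lborel"
    using ode1 unfolding L_def by (elim AE_E) blast
  obtain N2 where N2: "{x \<in> space lborel. \<not> (x \<in> {0..T} \<longrightarrow> (\<gamma>2 has_vector_derivative b (\<gamma>2 x)) (at x within {0..T}))} \<subseteq> N2"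
      "emeasure lborel N2 = 0" "N2 \<in> sets lborel"
    using ode2 by (elim AE_E) blast
  have uniq: "s = s'" if "s \<in> {0..L}" "s' \<in> {0..L}" "\<gamma>2 t - \<gamma>1 s \<in> int_lattice" "\<gamma>2 t - \<gamma>1 s' \<in> int_lattice" for t s s'
  proof -
    have "(\<gamma>2 t - \<gamma>1 s') - (\<gamma>2 t - \<gamma>1 s) \<in> int_lattice" by (rule lat_diff) (fact that(4), fact that(3))
    then have "\<gamma>1 s - \<gamma>1 s' \<in> int_lattice" by simp
    then show ?thesis using inj1 that(1,2) unfolding L_def by blast
  qed
  define \<sigma> where "\<sigma> t = (SOME s. s \<in> {0..L} \<and> \<gamma>2 t - \<gamma>1 s \<in> int_lattice)" for t
  have sig: "\<sigma> t \<in> {0..L} \<and> \<gamma>2 t - \<gamma>1 (\<sigma> t) \<in> int_lattice" if "t \<in> {0..T}" for t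
    unfolding \<sigma>_def by (rule someI_ex) (use incl that L_def in blast)
  have graph: "(\<lambda>x. (x, \<sigma> x)) ` {0..T} = ({0..T} \<times> {0..L}) \<inter> (\<lambda>z. \<gamma>2 (fst z) - \<gamma>1 (snd z)) -` int_lattice"
  proof (intro equalityI subsetI)
    fix z assume "z \<in> (\<lambda>x. (x, \<sigma> x)) ` {0..T}"
    then obtain t where t: "t \<in> {0..T}" "z = (t, \<sigma> t)" by auto
    then show "z \<in> ({0..T} \<times> {0..L}) \<inter> (\<lambda>z. \<gamma>2 (fst z) - \<gamma>1 (snd z)) -` int_lattice"
      using sig[OF t(1)] by auto
  next
    fix z assume z: "z \<in> ({0..T} \<times> {0..L}) \<inter> (\<lambda>z. \<gamma>2 (fst z) - \<gamma>1 (snd z)) -` int_lattice"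
    then have "snd z = \<sigma> (fst z)" using sig[of "fst z"] uniq[of "snd z" "\<sigma> (fst z)" "fst z"] by auto
    then show "z \<in> (\<lambda>x. (x, \<sigma> x)) ` {0..T}" using z by (intro image_eqI[of _ _ "fst z"]) auto
  qed
  have "continuous_on ({0..T} \<times> {0..L}) (\<lambda>z. \<gamma>2 (fst z) - \<gamma>1 (snd z))"
    by (intro continuous_on_diff continuous_on_compose2[OF cont2 continuous_on_fst]
        continuous_on_compose2[OF cont1 continuous_on_snd]) auto
  then have "closed (({0..T} \<times> {0..L}) \<inter> (\<lambda>z. \<gamma>2 (fst z) - \<gamma>1 (snd z)) -` int_lattice)"
    by (rule continuous_closed_preimage) (auto simp: closed_Times lat_closed)
  then have clg: "closed ((\<lambda>x. (x, \<sigma> x)) ` {0..T})" by (simp only: graph)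
  have sigc: "continuous_on {0..T} \<sigma>"
  proof (rule continuous_from_closed_graph[of "{0..L}"])
    show "compact {0..L}" by simp
    show "\<sigma> \<in> {0..T} \<rightarrow> {0..L}" using sig by blast
  qed (rule clg)
  define k where "k t = \<gamma>2 t - \<gamma>1 (\<sigma> t)" for t
  have kc: "continuous_on {0..T} k" unfolding k_def
    by (intro continuous_on_diff cont2 continuous_on_compose2[OF cont1 sigc]) (use sig in auto)
  have klat: "k t \<in> int_lattice" if "t \<in> {0..T}" for t using sig[OF that] by (simp add: k_def)
  have kconst: "k t = k 0" if t: "t \<in> {0..T}" for t
  proof -
    have "k t $ i = k 0 $ i" for i
    proof -
      have "(\<lambda>t. k t $ i) constant_on {0..T}"
      proof (rule continuous_discrete_range_constant)
        show "continuous_on {0..T} (\<lambda>t. k t $ i)" by (intro continuous_intros kc)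
        fix x assume x: "x \<in> {0..T}"
        show "\<exists>e>0. \<forall>y. y \<in> {0..T} \<and> k y $ i \<noteq> k x $ i \<longrightarrow> e \<le> norm (k y $ i - k x $ i)"
        proof (rule exI[of _ 1], intro conjI allI impI)
          fix y assume y: "y \<in> {0..T} \<and> k y $ i \<noteq> k x $ i"
          have "k y $ i \<in> \<int>" "k x $ i \<in> \<int>" using klat y x by (auto simp: int_lattice_def)
          then show "1 \<le> norm (k y $ i - k x $ i)" using Ints_dist1 y by simp
        qed simp
      qed simp
      then show ?thesis using t T_pos by (auto simp: constant_on_def)
    qed
    then show ?thesis by (simp add: vec_eq_iff)
  qed
  have k0: "k 0 \<in> int_lattice" using klat T_pos by simp
  have g_eq: "\<gamma>2 t = \<gamma>1 (\<sigma> t) + k 0" if "t \<in> {0..T}" for t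
    using kconst[OF that] by (simp add: k_def algebra_simps)
  interpret tr: traj \<gamma>1 \<gamma>2 b L T C1 C2 \<sigma> N1 N2
  proof
    show "0 < L" using T_pos by (simp add: L_def)
    show "0 < T" by fact
    show "C1-lipschitz_on {0..L} \<gamma>1" by fact
    show "C2-lipschitz_on {0..T} \<gamma>2" by fact
    show "N1 \<in> null_sets lborel" using N1 by auto
    show "N2 \<in> null_sets lborel" using N2 by auto
    show "(\<gamma>1 has_vector_derivative b (\<gamma>1 s)) (at s within {0..L})" if "s \<in> {0..L}" "s \<notin> N1" for s
      using N1(1) that by auto
    show "(\<gamma>2 has_vector_derivative b (\<gamma>2 t)) (at t within {0..T})" if "t \<in> {0..T}" "t \<notin> N2" for t
      using N2(1) that by auto
    show "inj_on \<gamma>1 {0..L}"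
    proof (rule inj_onI)
      fix x y assume xy: "x \<in> {0..L}" "y \<in> {0..L}" "\<gamma>1 x = \<gamma>1 y"
      then have "\<gamma>1 x - \<gamma>1 y \<in> int_lattice" using lat_zero by simp
      then show "x = y" using inj1 xy(1,2) unfolding L_def by blast
    qed
    show "\<sigma> t \<in> {0..L}" if "t \<in> {0..T}" for t using sig[OF that] by blast
    show "continuous_on {0..T} \<sigma>" by fact
    show "\<gamma>2 y - \<gamma>2 t = \<gamma>1 (\<sigma> y) - \<gamma>1 (\<sigma> t)" if "t \<in> {0..T}" "y \<in> {0..T}" for t y
      using g_eq[OF that(1)] g_eq[OF that(2)] by simp
    show "b (\<gamma>2 t) = b (\<gamma>1 (\<sigma> t))" if "t \<in> {0..T}" for t
      using g_eq[OF that] b_per k0 by (simp add: torus_periodic_def)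
    show "b \<in> borel_measurable borel" by fact
  qed
  have "T - L = T / 2" by (simp add: L_def)
  then show ?thesis using tr.main_loc by simp
qed

end
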